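(* Let $f\in L^1((0,\infty))$ and define, for $x>0$, $$\mathcal{H}f(x)=\frac{1}{x}\int_0^x f(t)\,dt-\frac{1}{1+x}\int_0^\infty f(t)\,dt.$$ If $$\int_0^\infty |f(t)|\left[\ln\left(1+\frac{1}{t}\right)+\ln(1+t)\right]dt<\infty,$$ then $\mathcal{H}f\in L^1((0,\infty))$. Conversely, if $f\in L^1((0,\infty))$ is non-negative and $\mathcal{H}f\in L^1((0,\infty))$, then $\int_0^\infty f(t)\left[\ln\left(1+\frac{1}{t}\right)+\ln(1+t)\right]dt<\infty$.
   Context: $L^1((0,\infty))$ denotes the space of measurable functions $f$ on $(0,\infty)$ with $\int_0^\infty |f(x)|\,dx<\infty$. *)

theory Defs
  imports "HOL-Analysis.Analysis"
begin

definition hardy_op :: "(real \<Rightarrow> real) \<Rightarrow> real \<Rightarrow> real" where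
  "hardy_op f x =
     (1 / x) * integral\<^sup>L (lebesgue_on {0<..x}) f
     - (1 / (1 + x)) * integral\<^sup>L (lebesgue_on {0<..}) f"

definition log_weight :: "real \<Rightarrow> real" where
  "log_weight t = ln (1 + 1 / t) + ln (1 + t)"

end

theory Submission
  imports Defs
begin

lemma sf_leb: "sigma_finite_measure (lebesgue :: real measure)"
proof
  let ?A = "range (\<lambda>n::nat. {-real n..real n})"
  have c1: "countable ?A" by simp
  have c2: "?A \<subseteq> sets (lebesgue :: real measure)" by auto
  have c3: "\<Union> ?A = space (lebesgue :: real measure)"
    proof (auto)
      fix x :: real
      obtain n :: nat where "\<bar>x\<bar> \<le> real n" using real_arch_simple by blast
      then show "\<exists>n::nat. - real n \<le> x \<and> x \<le> real n" by (intro exI[of _ n]) auto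
    qed
  have c4: "\<forall>a\<in>?A. emeasure (lebesgue :: real measure) a \<noteq> \<infinity>" by auto
  show "\<exists>A. countable A \<and> A \<subseteq> sets (lebesgue :: real measure) \<and> \<Union> A = space lebesgue \<and> (\<forall>a\<in>A. emeasure lebesgue a \<noteq> \<infinity>)"
    by (rule exI[where x = ?A]) (intro conjI c1 c2 c3 c4)
qed

interpretation leb: sigma_finite_measure "lebesgue :: real measure" by (rule sf_leb)
interpretation leb2: pair_sigma_finite "lebesgue :: real measure" "lebesgue :: real measure" ..

lemma fst_m[measurable]: "fst \<in> borel_measurable (lebesgue \<Otimes>\<^sub>M (lebesgue :: real measure))"
  using measurable_compose[OF measurable_fst id_borel_measurable_lebesgue] by (simp add: comp_def)
lemma snd_m[measurable]: "snd \<in> borel_measurable ((lebesgue :: real measure) \<Otimes>\<^sub>M (lebesgue :: real measure))"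
  using measurable_compose[OF measurable_snd id_borel_measurable_lebesgue] by (simp add: comp_def)
lemma h_snd[measurable]: "h \<in> borel_measurable lebesgue \<Longrightarrow> (\<lambda>p. h (snd p)) \<in> borel_measurable ((lebesgue :: real measure) \<Otimes>\<^sub>M (lebesgue :: real measure))"
  using measurable_compose[OF measurable_snd] by blast

definition kc :: "real \<Rightarrow> real \<Rightarrow> real" where
  "kc x t = (if 0 < x then (if t \<le> x then 1/(x*(1+x)) else 1/(1+x)) else 0)"

lemma kc_nonneg: "kc x t \<ge> 0" by (simp add: kc_def)

lemma L0a: assumes "t > 0"
  shows "(\<integral>\<^sup>+x. ennreal (1/(x*(1+x))) * indicator {t..} x \<partial>lborel) = ennreal (ln (1 + 1/t))"
proof -
  have "(\<integral>\<^sup>+x. ennreal (1/(x*(1+x))) * indicator {t..} x \<partial>lborel) = ennreal (0 - (ln t - ln (1+t)))"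
  proof (rule nn_integral_FTC_atLeast)
    show "(\<lambda>x::real. 1/(x*(1+x))) \<in> borel_measurable borel" by (simp add: borel_measurable_divide)
    fix x assume x: "t \<le> x"
    then have "x > 0" using assms by simp
    then show "((\<lambda>x. ln x - ln (1+x)) has_real_derivative 1/(x*(1+x))) (at x)"
      by (auto intro!: derivative_eq_intros simp: field_simps)
    show "0 \<le> 1/(x*(1+x))" using \<open>x>0\<close> by simp
  next
    have "((\<lambda>x::real. - ln (1 + inverse x)) \<longlongrightarrow> - ln (1 + 0)) at_top"
      by (intro tendsto_intros tendsto_inverse_0_at_top filterlim_ident) auto
    moreover have "eventually (\<lambda>x::real. - ln (1 + inverse x) = ln x - ln (1+x)) at_top"
    proof (rule eventually_mono[OF eventually_gt_at_top[of 0]])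
      fix x :: real assume "x > 0"
      then have "1 + inverse x = (1+x)/x" by (simp add: field_simps)
      then show "- ln (1 + inverse x) = ln x - ln (1+x)" using \<open>x>0\<close> by (simp add: ln_div)
    qed
    ultimately show "((\<lambda>x::real. ln x - ln (1+x)) \<longlongrightarrow> 0) at_top"
      using tendsto_cong by fastforce
  qed
  also have "0 - (ln t - ln (1+t)) = ln (1 + 1/t)"
  proof -
    have "1 + 1/t = (1+t)/t" using assms by (simp add: field_simps)
    then show ?thesis using assms by (simp add: ln_div)
  qed
  finally show ?thesis .
qed

lemma L0b: assumes "t > 0"
  shows "(\<integral>\<^sup>+x. ennreal (1/(1+x)) * indicator {0<..<t} x \<partial>lborel) = ennreal (ln (1 + t))"
proof -
  have "(\<integral>\<^sup>+x. ennreal (1/(1+x)) * indicator {0<..<t} x \<partial>lborel) = (\<integral>\<^sup>+x. ennreal (1/(1+x)) * indicator {0..t} x \<partial>lborel)"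
  proof (rule nn_integral_cong_AE)
    show "AE x in lborel. ennreal (1/(1+x)) * indicator {0<..<t} x = ennreal (1/(1+x)) * indicator {0..t} x"
      using AE_lborel_singleton[of 0] AE_lborel_singleton[of t]
      by eventually_elim (auto split: split_indicator)
  qed
  also have "\<dots> = ennreal (ln (1+t) - ln (1+0))"
  proof (rule nn_integral_FTC_Icc)
    show "(\<lambda>x::real. 1/(1+x)) \<in> borel_measurable borel" by (simp add: borel_measurable_divide)
    fix x :: real assume x: "x \<in> {0..t}"
    then show "((\<lambda>x. ln (1+x)) has_real_derivative 1/(1+x)) (at x)"
      by (auto intro!: derivative_eq_intros)
    show "0 \<le> 1/(1+x)" using x by simp
  qed (use assms in auto)
  finally show ?thesis by simp
qed

lemma L0: assumes "t > 0"
  shows "(\<integral>\<^sup>+x. ennreal (kc x t) \<partial>lebesgue) = ennreal (log_weight t)"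
proof -
  have eq: "ennreal (kc x t) = ennreal (1/(x*(1+x))) * indicator {t..} x + ennreal (1/(1+x)) * indicator {0<..<t} x" for x
    using assms by (auto simp: kc_def split: split_indicator)
  have "(\<integral>\<^sup>+x. ennreal (kc x t) \<partial>lebesgue) = (\<integral>\<^sup>+x. ennreal (kc x t) \<partial>lborel)"
    by (rule nn_integral_completion)
  also have "\<dots> = (\<integral>\<^sup>+x. ennreal (1/(x*(1+x))) * indicator {t..} x \<partial>lborel) + (\<integral>\<^sup>+x. ennreal (1/(1+x)) * indicator {0<..<t} x \<partial>lborel)"
    unfolding eq by (rule nn_integral_add) (auto simp: borel_measurable_divide)
  also have "\<dots> = ennreal (ln (1 + 1/t)) + ennreal (ln (1 + t))"
    using L0a[OF assms] L0b[OF assms] by simp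
  also have "\<dots> = ennreal (log_weight t)"
    using assms by (simp add: log_weight_def ennreal_plus[symmetric] del: ennreal_plus)
  finally show ?thesis .
qed


lemma lw_nonneg: "t > 0 \<Longrightarrow> log_weight t \<ge> 0"
  by (simp add: log_weight_def)

lemma kc_meas0:
  "(\<lambda>(x,t). kc x t) \<in> borel_measurable ((lebesgue :: real measure) \<Otimes>\<^sub>M (lebesgue :: real measure))"
  unfolding kc_def by measurable

lemma kc_meas[measurable]:
  "(\<lambda>p. kc (fst p) (snd p)) \<in> borel_measurable ((lebesgue :: real measure) \<Otimes>\<^sub>M (lebesgue :: real measure))"
  using kc_meas0 by (simp add: case_prod_beta')

lemma prod_meas:
  fixes g :: "real \<Rightarrow> real"
  assumes "g \<in> borel_measurable lebesgue"
  shows "(\<lambda>(x,t). ennreal (g t * kc x t)) \<in> borel_measurable ((lebesgue :: real measure) \<Otimes>\<^sub>M (lebesgue :: real measure))"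
proof -
  have "(\<lambda>p. g (snd p) * kc (fst p) (snd p)) \<in> borel_measurable ((lebesgue :: real measure) \<Otimes>\<^sub>M (lebesgue :: real measure))"
    by (intro borel_measurable_times kc_meas h_snd assms)
  then show ?thesis by (simp add: case_prod_beta')
qed

lemma kc_x_borel: "(\<lambda>x. kc x t) \<in> borel_measurable borel"
  unfolding kc_def by measurable

lemma kc_x_leb: "(\<lambda>x. ennreal (kc x t)) \<in> borel_measurable (lebesgue::real measure)"
proof -
  have [measurable]: "(\<lambda>x. kc x t) \<in> borel_measurable lebesgue"
    using measurable_compose[OF id_borel_measurable_lebesgue kc_x_borel[of t]] by (simp add: comp_def)
  show ?thesis by measurable
qed

lemma L1:
  fixes g :: "real \<Rightarrow> real"
  assumes gm[measurable]: "g \<in> borel_measurable lebesgue" and g0: "\<And>t. g t \<ge> 0"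
    and gz: "\<And>t. t \<le> 0 \<Longrightarrow> g t = 0"
  shows "(\<integral>\<^sup>+t. ennreal (g t * log_weight t) \<partial>lebesgue)
       = (\<integral>\<^sup>+x. (\<integral>\<^sup>+t. ennreal (g t * kc x t) \<partial>lebesgue) \<partial>lebesgue)"
proof -
  have m: "case_prod (\<lambda>x t. ennreal (g t * kc x t)) \<in> borel_measurable (lebesgue \<Otimes>\<^sub>M lebesgue)"
    by (rule prod_meas[OF gm])
  have "(\<integral>\<^sup>+x. (\<integral>\<^sup>+t. ennreal (g t * kc x t) \<partial>lebesgue) \<partial>lebesgue)
      = (\<integral>\<^sup>+t. (\<integral>\<^sup>+x. ennreal (g t * kc x t) \<partial>lebesgue) \<partial>lebesgue)"
    by (rule leb2.Fubini'[OF m, symmetric])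
  also have "\<dots> = (\<integral>\<^sup>+t. ennreal (g t * log_weight t) \<partial>lebesgue)"
  proof (rule nn_integral_cong)
    fix t :: real
    show "(\<integral>\<^sup>+x. ennreal (g t * kc x t) \<partial>lebesgue) = ennreal (g t * log_weight t)"
    proof (cases "t > 0")
      case True
      have "(\<integral>\<^sup>+x. ennreal (g t * kc x t) \<partial>lebesgue) = (\<integral>\<^sup>+x. ennreal (g t) * ennreal (kc x t) \<partial>lebesgue)"
        using g0[of t] by (intro nn_integral_cong) (simp add: ennreal_mult kc_def)
      also have "\<dots> = ennreal (g t) * (\<integral>\<^sup>+x. ennreal (kc x t) \<partial>lebesgue)"
        by (rule nn_integral_cmult) (rule kc_x_leb)
      also have "\<dots> = ennreal (g t * log_weight t)"
        using L0[OF True] g0 lw_nonneg[OF True] by (simp add: ennreal_mult)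
      finally show ?thesis .
    next
      case False
      then show ?thesis using gz[of t] by simp
    qed
  qed
  finally show ?thesis by simp
qed

lemma L2:
  fixes g :: "real \<Rightarrow> real"
  assumes gi: "integrable lebesgue g" and g0: "\<And>t. g t \<ge> 0" and x: "x > 0"
  shows "(\<integral>\<^sup>+t. ennreal (g t * kc x t) \<partial>lebesgue)
       = ennreal ((\<integral>t. g t * indicator {..x} t \<partial>lebesgue)/(x*(1+x)) + (\<integral>t. g t * indicator {x<..} t \<partial>lebesgue)/(1+x))"
proof -
  have i1: "integrable lebesgue (\<lambda>t. g t * indicator {..x} t)"
    by (rule integrable_real_mult_indicator[OF _ gi]) simp
  have i2: "integrable lebesgue (\<lambda>t. g t * indicator {x<..} t)"
    by (rule integrable_real_mult_indicator[OF _ gi]) simp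
  have eq: "g t * kc x t = (g t * indicator {..x} t) / (x*(1+x)) + (g t * indicator {x<..} t) / (1+x)" for t
    using x by (auto simp: kc_def split: split_indicator)
  have i3: "integrable lebesgue (\<lambda>t. (g t * indicator {..x} t) / (x*(1+x)) + (g t * indicator {x<..} t) / (1+x))"
    using i1 i2 by (intro Bochner_Integration.integrable_add integrable_divide_zero)
  have "(\<integral>\<^sup>+t. ennreal (g t * kc x t) \<partial>lebesgue)
      = ennreal (\<integral>t. (g t * indicator {..x} t) / (x*(1+x)) + (g t * indicator {x<..} t) / (1+x) \<partial>lebesgue)"
    unfolding eq using x g0
    by (intro nn_integral_eq_integral i3) (auto intro!: add_nonneg_nonneg simp: split: split_indicator)
  also have "\<dots> = ennreal ((\<integral>t. g t * indicator {..x} t \<partial>lebesgue)/(x*(1+x)) + (\<integral>t. g t * indicator {x<..} t \<partial>lebesgue)/(1+x))"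
    using i1 i2 by (simp add: Bochner_Integration.integral_add integrable_divide_zero)
  finally show ?thesis .
qed

lemma RI1:
  fixes x a b a' b' :: real
  assumes x: "x > 0" and "\<bar>a\<bar> \<le> a'" and "\<bar>b\<bar> \<le> b'"
  shows "\<bar>a/x - (a+b)/(1+x)\<bar> \<le> a'/(x*(1+x)) + b'/(1+x)"
proof -
  have e: "a/x - (a+b)/(1+x) = a/(x*(1+x)) - b/(1+x)" using x by (simp add: divide_simps) (simp add: algebra_simps)
  have "\<bar>a/(x*(1+x)) - b/(1+x)\<bar> \<le> \<bar>a/(x*(1+x))\<bar> + \<bar>b/(1+x)\<bar>"
    by (rule abs_triangle_ineq4)
  also have "\<dots> = \<bar>a\<bar>/(x*(1+x)) + \<bar>b\<bar>/(1+x)"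
    using x by (simp add: abs_divide abs_mult)
  also have "\<dots> \<le> a'/(x*(1+x)) + b'/(1+x)"
    using x assms by (intro add_mono divide_right_mono) auto
  finally show ?thesis using e by simp
qed

lemma RI2:
  fixes x a b :: real
  assumes x: "x > 0" and a: "a \<ge> 0" and b: "b \<ge> 0"
  shows "a/(x*(1+x)) + b/(1+x) \<le> \<bar>a/x - (a+b)/(1+x)\<bar> + 2*(a+b)*kc x 1"
proof -
  define A where "A = a/(x*(1+x))"
  define B where "B = b/(1+x)"
  have e: "a/x - (a+b)/(1+x) = A - B" using x by (simp add: A_def B_def divide_simps) (simp add: algebra_simps)
  show ?thesis
  proof (cases "x < 1")
    case True
    have "B \<le> (a+b) * kc x 1" using True x a b by (simp add: B_def kc_def divide_right_mono)
    then show ?thesis unfolding e A_def[symmetric] B_def[symmetric] by linarith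
  next
    case False
    have "A \<le> (a+b) * kc x 1" using False x a b by (simp add: A_def kc_def divide_right_mono)
    then show ?thesis unfolding e A_def[symmetric] B_def[symmetric] by linarith
  qed
qed

lemma lw_meas: "log_weight \<in> borel_measurable (lebesgue :: real measure)"
proof -
  have "log_weight \<in> borel_measurable borel"
    unfolding log_weight_def by (intro borel_measurable_add borel_measurable_ln) (simp_all add: borel_measurable_divide)
  then show ?thesis
    using measurable_compose[OF id_borel_measurable_lebesgue] by (simp add: comp_def)
qed

lemma id_leb[measurable]: "(\<lambda>x::real. x) \<in> borel_measurable lebesgue"
  using id_borel_measurable_lebesgue by (simp add: id_def)

theorem theorem2p3:
  fixes f :: "real \<Rightarrow> real"
  assumes f_L1: "integrable (lebesgue_on {0<..}) f"
  shows "(integrable (lebesgue_on {0<..}) (\<lambda>t. \<bar>f t\<bar> * log_weight t)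
           \<longrightarrow> integrable (lebesgue_on {0<..}) (hardy_op f))
       \<and> ((\<forall>t>0. f t \<ge> 0) \<and> integrable (lebesgue_on {0<..}) (hardy_op f)
           \<longrightarrow> integrable (lebesgue_on {0<..}) (\<lambda>t. f t * log_weight t))"
proof -
  define h where "h t = indicator {0<..} t * f t" for t :: real
  have Psets: "{(0::real)<..} \<inter> space lebesgue \<in> sets lebesgue" by simp
  have hi: "integrable lebesgue h"
    using f_L1 unfolding h_def by (simp add: integrable_restrict_space)
  have hm[measurable]: "h \<in> borel_measurable lebesgue" using hi by auto
  have hz: "\<And>t. t \<le> 0 \<Longrightarrow> h t = 0" by (simp add: h_def)
  define S where "S = integral\<^sup>L (lebesgue_on {0<..}) f"
  have S_eq: "S = (\<integral>t. h t \<partial>lebesgue)"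
    unfolding S_def h_def by (simp add: integral_restrict_space)
  define F where "F g x = (\<integral>t. g t * indicator {..x} t \<partial>lebesgue)" for g :: "real \<Rightarrow> real" and x :: real
  define G where "G g x = (\<integral>t. g t * indicator {x<..} t \<partial>lebesgue)" for g :: "real \<Rightarrow> real" and x :: real
  have hop: "hardy_op f x = F h x / x - S/(1+x)" if x: "x > 0" for x
  proof -
    have "integral\<^sup>L (lebesgue_on {0<..x}) f = (\<integral>t. indicator {0<..x} t * f t \<partial>lebesgue)"
      by (simp add: integral_restrict_space)
    also have "\<dots> = F h x" unfolding F_def h_def
      by (intro Bochner_Integration.integral_cong) (auto split: split_indicator)
    finally show ?thesis unfolding hardy_op_def S_def by simp
  qed
  have FG: "(\<integral>t. g t \<partial>lebesgue) = F g x + G g x" if gi: "integrable lebesgue g" for g x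
  proof -
    have i1: "integrable lebesgue (\<lambda>t. g t * indicator {..x} t)"
      by (rule integrable_real_mult_indicator[OF _ gi]) simp
    have i2: "integrable lebesgue (\<lambda>t. g t * indicator {x<..} t)"
      by (rule integrable_real_mult_indicator[OF _ gi]) simp
    have "(\<integral>t. g t \<partial>lebesgue) = (\<integral>t. g t * indicator {..x} t + g t * indicator {x<..} t \<partial>lebesgue)"
      by (intro Bochner_Integration.integral_cong) (auto split: split_indicator)
    also have "\<dots> = F g x + G g x"
      unfolding F_def G_def using i1 i2 by (rule Bochner_Integration.integral_add)
    finally show ?thesis .
  qed
  have Fb: "\<bar>F g x\<bar> \<le> F (\<lambda>t. \<bar>g t\<bar>) x" for g x
  proof -
    have "\<bar>F g x\<bar> \<le> (\<integral>t. norm (g t * indicator {..x} t) \<partial>lebesgue)"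
      unfolding F_def using integral_norm_bound[of lebesgue "\<lambda>t. g t * indicator {..x} t"] by simp
    also have "\<dots> = F (\<lambda>t. \<bar>g t\<bar>) x" unfolding F_def
      by (intro Bochner_Integration.integral_cong) (auto split: split_indicator)
    finally show ?thesis .
  qed
  have Gb: "\<bar>G g x\<bar> \<le> G (\<lambda>t. \<bar>g t\<bar>) x" for g x
  proof -
    have "\<bar>G g x\<bar> \<le> (\<integral>t. norm (g t * indicator {x<..} t) \<partial>lebesgue)"
      unfolding G_def using integral_norm_bound[of lebesgue "\<lambda>t. g t * indicator {x<..} t"] by simp
    also have "\<dots> = G (\<lambda>t. \<bar>g t\<bar>) x" unfolding G_def
      by (intro Bochner_Integration.integral_cong) (auto split: split_indicator)
    finally show ?thesis .
  qed
  define H where "H x = indicator {0<..} x * hardy_op f x" for x :: real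
  have Hint_iff: "integrable (lebesgue_on {0<..}) (hardy_op f) \<longleftrightarrow> integrable lebesgue H"
    unfolding H_def by (simp add: integrable_restrict_space)
  have H_eq: "H = (\<lambda>x. indicator {0<..} x * (F h x / x - S/(1+x)))"
    by (rule ext) (simp add: H_def hop split: split_indicator)
  have Fm[measurable]: "(\<lambda>x. F h x) \<in> borel_measurable lebesgue"
  proof -
    have "(\<lambda>(x,t). h t * (if t \<le> x then 1 else 0)) \<in> borel_measurable ((lebesgue :: real measure) \<Otimes>\<^sub>M lebesgue)"
      by measurable
    then have "(\<lambda>(x,t). h t * indicator {..x} t) \<in> borel_measurable ((lebesgue :: real measure) \<Otimes>\<^sub>M lebesgue)"
      by (simp add: indicator_def case_prod_beta')
    then show ?thesis unfolding F_def
      by (rule leb.borel_measurable_lebesgue_integral[where f = "\<lambda>x t. h t * indicator {..x} t", simplified])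
  qed
  have Hm[measurable]: "H \<in> borel_measurable lebesgue"
    unfolding H_eq by measurable
  have fwd: "integrable lebesgue H" if a: "integrable (lebesgue_on {0<..}) (\<lambda>t. \<bar>f t\<bar> * log_weight t)"
  proof -
    have eqa: "(\<lambda>t. indicator {0<..} t * (\<bar>f t\<bar> * log_weight t)) = (\<lambda>t. \<bar>h t\<bar> * log_weight t)"
      by (rule ext) (auto simp: h_def split: split_indicator)
    have ai: "integrable lebesgue (\<lambda>t. \<bar>h t\<bar> * log_weight t)"
      using a unfolding integrable_restrict_space[OF Psets]
      using eqa by simp
    have nn: "\<bar>h t\<bar> * log_weight t \<ge> 0" for t
      by (cases "t > 0") (auto simp: hz lw_nonneg)
    have fin: "(\<integral>\<^sup>+t. ennreal (\<bar>h t\<bar> * log_weight t) \<partial>lebesgue) < \<infinity>"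
      using integrableD(2)[OF ai] nn by (simp add: less_top)
    have ahi: "integrable lebesgue (\<lambda>t. \<bar>h t\<bar>)" using hi by simp
    have "(\<integral>\<^sup>+x. ennreal (norm (H x)) \<partial>lebesgue) \<le> (\<integral>\<^sup>+x. (\<integral>\<^sup>+t. ennreal (\<bar>h t\<bar> * kc x t) \<partial>lebesgue) \<partial>lebesgue)"
    proof (rule nn_integral_mono)
      fix x :: real
      show "ennreal (norm (H x)) \<le> (\<integral>\<^sup>+t. ennreal (\<bar>h t\<bar> * kc x t) \<partial>lebesgue)"
      proof (cases "x > 0")
        case True
        have e1: "(\<integral>\<^sup>+t. ennreal (\<bar>h t\<bar> * kc x t) \<partial>lebesgue)
            = ennreal (F (\<lambda>t. \<bar>h t\<bar>) x/(x*(1+x)) + G (\<lambda>t. \<bar>h t\<bar>) x/(1+x))"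
          using L2[OF ahi _ True] by (simp add: F_def G_def)
        have "norm (H x) = \<bar>F h x / x - (F h x + G h x)/(1+x)\<bar>"
          using True by (simp add: H_def hop S_eq FG[OF hi, of x])
        also have "\<dots> \<le> F (\<lambda>t. \<bar>h t\<bar>) x/(x*(1+x)) + G (\<lambda>t. \<bar>h t\<bar>) x/(1+x)"
          by (rule RI1[OF True Fb Gb])
        finally show ?thesis unfolding e1 by (rule ennreal_leI)
      next
        case False
        then show ?thesis by (simp add: H_def)
      qed
    qed
    also have "\<dots> = (\<integral>\<^sup>+t. ennreal (\<bar>h t\<bar> * log_weight t) \<partial>lebesgue)"
      by (rule L1[symmetric]) (auto simp: hz)
    finally have "(\<integral>\<^sup>+x. ennreal (norm (H x)) \<partial>lebesgue) < \<infinity>" using fin by (simp add: le_less_trans)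
    then show ?thesis by (rule integrableI_bounded[OF Hm])
  qed
  have bwd: "integrable (lebesgue_on {0<..}) (\<lambda>t. f t * log_weight t)"
    if pos: "\<forall>t>0. f t \<ge> 0" and Hi: "integrable lebesgue H"
  proof -
    have h0: "h t \<ge> 0" for t using pos by (simp add: h_def split: split_indicator)
    have eqb: "(\<lambda>t. indicator {0<..} t * (f t * log_weight t)) = (\<lambda>t. h t * log_weight t)"
      by (rule ext) (auto simp: h_def split: split_indicator)
    have nn: "h t * log_weight t \<ge> 0" for t
      by (cases "t > 0") (auto simp: hz lw_nonneg h0)
    have Sge: "S \<ge> 0" unfolding S_eq using h0 by simp
    have kc1m: "(\<lambda>x. ennreal (kc x 1)) \<in> borel_measurable lebesgue" by (rule kc_x_leb)
    have "(\<integral>\<^sup>+t. ennreal (norm (h t * log_weight t)) \<partial>lebesgue) = (\<integral>\<^sup>+t. ennreal (h t * log_weight t) \<partial>lebesgue)"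
      using nn by simp
    also have "\<dots> = (\<integral>\<^sup>+x. (\<integral>\<^sup>+t. ennreal (h t * kc x t) \<partial>lebesgue) \<partial>lebesgue)"
      by (rule L1) (auto simp: hz h0)
    also have "\<dots> \<le> (\<integral>\<^sup>+x. ennreal (norm (H x)) + ennreal (2*S) * ennreal (kc x 1) \<partial>lebesgue)"
    proof (rule nn_integral_mono)
      fix x :: real
      show "(\<integral>\<^sup>+t. ennreal (h t * kc x t) \<partial>lebesgue) \<le> ennreal (norm (H x)) + ennreal (2*S) * ennreal (kc x 1)"
      proof (cases "x > 0")
        case True
        have e1: "(\<integral>\<^sup>+t. ennreal (h t * kc x t) \<partial>lebesgue) = ennreal (F h x/(x*(1+x)) + G h x/(1+x))"
          using L2[OF hi h0 True] by (simp add: F_def G_def)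
        have Fn: "F h x \<ge> 0" unfolding F_def using h0 by (simp)
        have Gn: "G h x \<ge> 0" unfolding G_def using h0 by (simp)
        have "F h x/(x*(1+x)) + G h x/(1+x) \<le> \<bar>F h x / x - (F h x + G h x)/(1+x)\<bar> + 2*(F h x + G h x)*kc x 1"
          by (rule RI2[OF True Fn Gn])
        also have "\<dots> = norm (H x) + (2*S) * kc x 1"
          using True by (simp add: H_def hop S_eq FG[OF hi, of x])
        finally have "ennreal (F h x/(x*(1+x)) + G h x/(1+x)) \<le> ennreal (norm (H x) + (2*S) * kc x 1)"
          by (rule ennreal_leI)
        also have "\<dots> = ennreal (norm (H x)) + ennreal (2*S) * ennreal (kc x 1)"
          using Sge kc_nonneg[of x 1] by (simp add: ennreal_plus ennreal_mult)
        finally show ?thesis unfolding e1 .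
      next
        case False
        then show ?thesis by (simp add: kc_def)
      qed
    qed
    also have "\<dots> = (\<integral>\<^sup>+x. ennreal (norm (H x)) \<partial>lebesgue) + ennreal (2*S) * (\<integral>\<^sup>+x. ennreal (kc x 1) \<partial>lebesgue)"
      using kc1m by (simp add: nn_integral_add nn_integral_cmult)
    also have "\<dots> < \<infinity>"
    proof -
      have f1: "(\<integral>\<^sup>+x. ennreal (norm (H x)) \<partial>lebesgue) < \<infinity>"
        using Hi unfolding integrable_iff_bounded by blast
      have f2: "ennreal (2*S) * (\<integral>\<^sup>+x. ennreal (kc x 1) \<partial>lebesgue) < \<infinity>"
        unfolding L0[OF zero_less_one] by (simp add: ennreal_mult_less_top)
      show ?thesis using f1 f2 by (metis ennreal_add_less_top infinity_ennreal_def)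
    qed
    finally have fin: "(\<integral>\<^sup>+t. ennreal (norm (h t * log_weight t)) \<partial>lebesgue) < \<infinity>" .
    have "integrable lebesgue (\<lambda>t. h t * log_weight t)"
      by (rule integrableI_bounded[OF _ fin]) (intro borel_measurable_times hm lw_meas)
    then show ?thesis
      unfolding integrable_restrict_space[OF Psets]
      using eqb by simp
  qed
  show ?thesis using fwd bwd Hint_iff by blast
qed

end
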